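(* Let $\mathbf{L}=\{\mathbf{b}_1,\dots,\mathbf{b}_r\}+\mathbb{N}(\mathbf{F})\subseteq\mathbb{N}^n$ with $\mathbf{F}$ finite, such that $(\mathbf{b}_i+\mathbb{N}(\mathbf{F}))\cap(\mathbf{b}_j+\mathbb{N}(\mathbf{F}))\neq\emptyset$ for all $i,j$ (so $\mathbf{L}$ is directed hybridlinear), and let $\mathbf{x}\in\mathbf{L}$. Then $\dim\big(\mathbf{L}\setminus(\mathbf{x}+\mathbb{N}(\mathbf{F}))\big)<\dim(\mathbf{L})$.
   Context: $\mathbb{N}(\mathbf{F})$: finite $\mathbb{N}$-linear combinations of $\mathbf{F}$. Dimension of $\mathbf{X}\subseteq\mathbb{Q}^n$: the least $k\in\mathbb{N}$ such that $\mathbf{X}\subseteq\bigcup_{i=1}^r(\mathbf{c}_i+\mathbf{V}_i)$ for finitely many $\mathbf{c}_i\in\mathbb{Q}^n$ and vector subspaces $\mathbf{V}_i$ of dimension $\le k$. *)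

theory Defs
  imports "HOL-Analysis.Analysis"
begin

definition qscale :: "rat \<Rightarrow> rat ^ 'n \<Rightarrow> rat ^ 'n" where
  "qscale c v = (\<chi> i. c * v $ i)"

definition natcomb :: "(nat ^ 'n) set \<Rightarrow> (nat ^ 'n) set" where
  "natcomb F = {y. \<exists>c :: nat ^ 'n \<Rightarrow> nat. y = (\<Sum>f\<in>F. (\<chi> i. c f * f $ i))}"

definition ratvec :: "nat ^ 'n \<Rightarrow> rat ^ 'n" where
  "ratvec x = (\<chi> i. of_nat (x $ i))"

definition has_dim_at_most :: "(rat ^ 'n) set \<Rightarrow> nat \<Rightarrow> bool" where
  "has_dim_at_most X k \<longleftrightarrow> (\<exists>I. finite I \<and>
      (\<forall>p\<in>I. module.subspace qscale (snd p) \<and> vector_space.dim qscale (snd p) \<le> k) \<and>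
      X \<subseteq> (\<Union>p\<in>I. (\<lambda>v. fst p + v) ` snd p))"

definition setdim :: "(rat ^ 'n) set \<Rightarrow> int" where
  "setdim X = (if X = {} then -1 else int (LEAST k. has_dim_at_most X k))"

definition natdim :: "(nat ^ 'n) set \<Rightarrow> int" where
  "natdim X = setdim (ratvec ` X)"

end

theory Submission
  imports Defs
begin

lemma qscale_eq: "qscale = (*s)"
  by (intro ext) (simp add: qscale_def vector_scalar_mult_def)

lemma ratvec_add: "ratvec (a + b) = ratvec a + ratvec b"
  by (simp add: ratvec_def vec_eq_iff)

lemma ratvec_zero: "ratvec 0 = 0"
  by (simp add: ratvec_def vec_eq_iff)

lemma ratvec_sum: "ratvec (\<Sum>f\<in>A. g f) = (\<Sum>f\<in>A. ratvec (g f))"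
  by (induction A rule: infinite_finite_induct) (auto simp: ratvec_zero ratvec_add)

lemma ratvec_smul: "ratvec (\<chi> i. t * v $ i) = of_nat t *s ratvec v"
  by (simp add: ratvec_def vec_eq_iff)

lemma ratvec_inj: "inj ratvec"
  by (auto simp: inj_on_def ratvec_def vec_eq_iff)

lemma natcomb_zero: "0 \<in> natcomb F"
  unfolding natcomb_def by (rule CollectI, rule exI[of _ "\<lambda>_. 0"]) (simp add: vec_eq_iff)

lemma natcomb_add: "a \<in> natcomb F \<Longrightarrow> b \<in> natcomb F \<Longrightarrow> a + b \<in> natcomb F"
  unfolding natcomb_def
proof safe
  fix c d :: "_ \<Rightarrow> nat"
  show "\<exists>e. (\<Sum>f\<in>F. \<chi> i. c f * f $ i) + (\<Sum>f\<in>F. \<chi> i. d f * f $ i) = (\<Sum>f\<in>F. \<chi> i. e f * f $ i)"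
    by (rule exI[of _ "\<lambda>f. c f + d f"]) (simp add: vec_eq_iff sum.distrib algebra_simps)
qed

lemma natcomb_smul: "a \<in> natcomb F \<Longrightarrow> (\<chi> i. t * a $ i) \<in> natcomb F"
  unfolding natcomb_def
proof safe
  fix c :: "_ \<Rightarrow> nat"
  show "\<exists>e. (\<chi> i. t * (\<Sum>f\<in>F. \<chi> i. c f * f $ i) $ i) = (\<Sum>f\<in>F. \<chi> i. e f * f $ i)"
    by (rule exI[of _ "\<lambda>f. t * c f"]) (simp add: vec_eq_iff sum_distrib_left algebra_simps)
qed

lemma natcomb_base: "finite F \<Longrightarrow> g \<in> F \<Longrightarrow> g \<in> natcomb F"
  unfolding natcomb_def
proof (rule CollectI, rule exI[of _ "\<lambda>f. if f = g then 1 else 0"])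
  assume "finite F" "g \<in> F"
  then show "g = (\<Sum>f\<in>F. \<chi> i. (if f = g then 1 else 0) * f $ i)"
  proof -
    have "(\<Sum>f\<in>F. (if f = g then 1 else 0) * f $ i) = g $ i" for i
    proof -
      have "(\<Sum>f\<in>F. (if f = g then 1 else 0) * f $ i) = (\<Sum>f\<in>F. if f = g then g $ i else 0)"
        by (rule sum.cong) auto
      also have "\<dots> = g $ i" using \<open>finite F\<close> \<open>g \<in> F\<close> by simp
      finally show ?thesis .
    qed
    then show ?thesis by (simp add: vec_eq_iff del: One_nat_def)
  qed
qed

lemma clear_denoms:
  fixes X :: "(rat^'n) set"
  assumes "finite X" "v \<in> vec.span X"
  shows "\<exists>M::nat. M > 0 \<and> (\<exists>z::rat^'n \<Rightarrow> int. of_nat M *s v = (\<Sum>x\<in>X. of_int (z x) *s x))"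
proof -
  obtain q where v: "v = (\<Sum>x\<in>X. q x *s x)"
    using assms vec.span_finite by blast
  define den where "den x = snd (quotient_of (q x))" for x
  define num where "num x = fst (quotient_of (q x))" for x
  have denpos: "den x > 0" for x
    unfolding den_def using quotient_of_denom_pos' by blast
  have qx: "q x = of_int (num x) / of_int (den x)" for x
    unfolding num_def den_def by (metis quotient_of_div surjective_pairing)
  define P where "P = (\<Prod>x\<in>X. den x)"
  have Ppos: "P > 0" unfolding P_def using denpos by (simp add: prod_pos)
  define M where "M = nat P"
  define z where "z x = num x * (\<Prod>y\<in>X-{x}. den y)" for x
  have zq: "of_int (z x) = of_nat M * q x" if "x \<in> X" for x
  proof -
    have "P = den x * (\<Prod>y\<in>X-{x}. den y)"
      unfolding P_def using assms(1) that by (simp add: prod.remove)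
    then have "(of_nat M :: rat) = of_int (den x) * of_int (\<Prod>y\<in>X-{x}. den y)"
      unfolding M_def using Ppos by (metis of_int_mult of_int_of_nat_eq order_less_le zero_le_imp_eq_int nat_int)
    then show ?thesis
      unfolding z_def qx using denpos[of x] by (simp add: field_simps)
  qed
  have "of_nat M *s v = (\<Sum>x\<in>X. of_int (z x) *s x)"
    unfolding v by (simp add: vec_eq_iff vector_scalar_mult_def sum_distrib_left zq mult.assoc cong: sum.cong)
  moreover have "M > 0" unfolding M_def using Ppos by simp
  ultimately show ?thesis by blast
qed

lemma key_S:
  fixes F S :: "(nat^'n) set" and c a :: "nat^'n \<Rightarrow> nat"
  assumes fin: "finite F" and SF: "S \<subseteq> F"
    and sp: "vec.span (ratvec ` S) = vec.span (ratvec ` F)"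
  shows "\<exists>K. \<forall>a. (\<forall>g\<in>S. K \<le> a g) \<longrightarrow>
     (\<Sum>f\<in>F. \<chi> i. a f * f$i) \<in> (\<lambda>v. (\<Sum>f\<in>F. \<chi> i. c f * f$i) + v) ` natcomb F"
proof -
  have finS: "finite S" using fin SF finite_subset by blast
  have "\<exists>M>0. \<exists>Z. of_nat M *s ratvec f = (\<Sum>g\<in>S. of_int (Z g) *s ratvec g)" if "f \<in> F" for f
  proof -
    have "ratvec f \<in> vec.span (ratvec ` F)" by (rule vec.span_base) (use that in blast)
    then have "ratvec f \<in> vec.span (ratvec ` S)" by (simp only: sp)
    then obtain M z where M0: "M > 0" and M: "of_nat M *s ratvec f = (\<Sum>x\<in>ratvec ` S. of_int (z x) *s x)"
      using clear_denoms[of "ratvec ` S" "ratvec f"] finS by blast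
    note M
    also have "\<dots> = (\<Sum>g\<in>S. of_int (z (ratvec g)) *s ratvec g)"
      by (subst sum.reindex) (auto intro: inj_on_subset[OF ratvec_inj])
    finally have eq: "of_nat M *s ratvec f = (\<Sum>g\<in>S. of_int (z (ratvec g)) *s ratvec g)" .
    show ?thesis by (rule exI[of _ M], rule conjI[OF M0], rule exI, rule eq)
  qed
  then obtain M Z where MZ: "\<And>f. f \<in> F \<Longrightarrow> M f > 0"
    "\<And>f. f \<in> F \<Longrightarrow> of_nat (M f) *s ratvec f = (\<Sum>g\<in>S. of_int (Z f g) *s ratvec g)"
    by metis
  define r where "r f i = (of_nat (f $ i) :: rat)" for f :: "nat^'n" and i
  have rel: "of_nat (M f) * r f i = (\<Sum>g\<in>S. of_int (Z f g) * r g i)" if "f \<in> F" for f i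
  proof -
    have "(of_nat (M f) *s ratvec f) $ i = (\<Sum>g\<in>S. of_int (Z f g) *s ratvec g) $ i"
      using MZ(2)[OF that] by simp
    then show ?thesis by (simp add: r_def ratvec_def vector_scalar_mult_def)
  qed
  define K where "K = (\<Sum>f\<in>F. \<Sum>g\<in>S. c f * nat \<bar>Z f g\<bar>)"
  show ?thesis
  proof (rule exI[of _ K], intro allI impI)
    fix a :: "nat^'n \<Rightarrow> nat"
    assume aK: "\<forall>g\<in>S. K \<le> a g"
    define E where "E f = int (a f) + int (c f) * (int (M f) - 1)
        - (if f \<in> S then (\<Sum>f'\<in>F. int (c f') * Z f' f) else 0)" for f
    have Epos: "E f \<ge> 0" if "f \<in> F" for f
    proof -
      have m: "int (c f) * (int (M f) - 1) \<ge> 0" using MZ(1)[OF that] by simp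
      show ?thesis
      proof (cases "f \<in> S")
        case True
        have "(\<Sum>f'\<in>F. int (c f') * Z f' f) \<le> (\<Sum>f'\<in>F. int (c f' * nat \<bar>Z f' f\<bar>))"
          by (rule sum_mono) (simp add: mult_left_mono)
        also have "\<dots> = int (\<Sum>f'\<in>F. c f' * nat \<bar>Z f' f\<bar>)" by simp
        also have "(\<Sum>f'\<in>F. c f' * nat \<bar>Z f' f\<bar>) \<le> K"
          unfolding K_def using True finS
          by (intro sum_mono member_le_sum[of f S "\<lambda>g. _ * nat \<bar>Z _ g\<bar>"]) auto
        also have "K \<le> a f" using aK True by blast
        finally show ?thesis using m True unfolding E_def by simp
      qed (use m in \<open>simp add: E_def\<close>)
    qed
    define e where "e f = nat (E f)" for f
    define w where "w = (\<Sum>f\<in>F. \<chi> i. e f * f$i)"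
    have wN: "w \<in> natcomb F" unfolding w_def natcomb_def by blast
    have eq: "(\<Sum>f\<in>F. \<chi> i. a f * f$i) = (\<Sum>f\<in>F. \<chi> i. c f * f$i) + w"
    proof -
      have H: "(of_nat ((\<Sum>f\<in>F. \<chi> i. a f * f$i) $ i) :: rat) = of_nat (((\<Sum>f\<in>F. \<chi> i. c f * f$i) + w) $ i)" for i
      proof -
        have eE: "of_nat (e f) = (of_int (E f) :: rat)" if "f \<in> F" for f
          using Epos[OF that] unfolding e_def by simp
        have dbl: "(\<Sum>f\<in>F. (if f \<in> S then (\<Sum>f'\<in>F. of_int (int (c f') * Z f' f)) else 0) * r f i)
            = (\<Sum>f'\<in>F. of_nat (c f') * (of_nat (M f') * r f' i))"
        proof -
          have "(\<Sum>f\<in>F. (if f \<in> S then (\<Sum>f'\<in>F. of_int (int (c f') * Z f' f)) else 0) * r f i)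
              = (\<Sum>f\<in>F. if f \<in> S then (\<Sum>f'\<in>F. of_int (int (c f') * Z f' f)) * r f i else 0)"
            by (rule sum.cong) auto
          also have "\<dots> = (\<Sum>g\<in>S. (\<Sum>f'\<in>F. of_int (int (c f') * Z f' g)) * r g i)"
            using sum.inter_restrict[OF fin, of "\<lambda>g. (\<Sum>f'\<in>F. of_int (int (c f') * Z f' g)) * r g i" S] SF
            by (simp add: Int_absorb1 del: of_int_mult)
          also have "\<dots> = (\<Sum>g\<in>S. \<Sum>f'\<in>F. of_nat (c f') * (of_int (Z f' g) * r g i))"
            by (simp add: sum_distrib_right mult.assoc)
          also have "\<dots> = (\<Sum>f'\<in>F. of_nat (c f') * (\<Sum>g\<in>S. of_int (Z f' g) * r g i))"
            by (subst sum.swap) (simp add: sum_distrib_left)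
          also have "\<dots> = (\<Sum>f'\<in>F. of_nat (c f') * (of_nat (M f') * r f' i))"
            by (rule sum.cong) (auto simp: rel)
          finally show ?thesis .
        qed
        have "(of_nat (((\<Sum>f\<in>F. \<chi> i. c f * f$i) + w) $ i) :: rat)
            = (\<Sum>f\<in>F. of_nat (c f) * r f i) + (\<Sum>f\<in>F. of_nat (e f) * r f i)"
          by (simp add: w_def r_def)
        also have "(\<Sum>f\<in>F. of_nat (e f) * r f i) = (\<Sum>f\<in>F. of_int (E f) * r f i)"
          by (rule sum.cong) (auto simp: eE)
        also have "\<dots> = (\<Sum>f\<in>F. of_nat (a f) * r f i) + (\<Sum>f\<in>F. of_nat (c f) * (of_nat (M f) * r f i))
             - (\<Sum>f\<in>F. of_nat (c f) * r f i)
             - (\<Sum>f\<in>F. (if f \<in> S then (\<Sum>f'\<in>F. of_int (int (c f') * Z f' f)) else 0) * r f i)"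
        proof -
          have "of_int (E f) * r f i = of_nat (a f) * r f i + of_nat (c f) * (of_nat (M f) * r f i)
             - of_nat (c f) * r f i
             - (if f \<in> S then (\<Sum>f'\<in>F. of_int (int (c f') * Z f' f)) else 0) * r f i" if "f \<in> F" for f
            using MZ(1)[OF that] by (simp add: E_def algebra_simps of_nat_diff)
          then have "(\<Sum>f\<in>F. of_int (E f) * r f i) = (\<Sum>f\<in>F. of_nat (a f) * r f i + of_nat (c f) * (of_nat (M f) * r f i)
             - of_nat (c f) * r f i
             - (if f \<in> S then (\<Sum>f'\<in>F. of_int (int (c f') * Z f' f)) else 0) * r f i)"
            by (rule sum.cong[OF refl])
          then show ?thesis by (simp add: sum.distrib sum_subtractf)
        qed
        finally show ?thesis unfolding dbl by (simp add: r_def)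
      qed
      show ?thesis unfolding vec_eq_iff by (intro allI of_nat_eq_iff[THEN iffD1, OF H])
    qed
    show "(\<Sum>f\<in>F. \<chi> i. a f * f$i) \<in> (\<lambda>v. (\<Sum>f\<in>F. \<chi> i. c f * f$i) + v) ` natcomb F"
      using eq wN by blast
  qed
qed

lemma pigeon:
  assumes finA: "finite A" and one: "\<forall>a\<in>A. \<forall>t t'. P a t \<and> P a t' \<longrightarrow> t = t'"
  shows "\<exists>t::nat. t \<le> card A \<and> (\<forall>a\<in>A. \<not> P a t)"
proof (rule ccontr)
  assume H: "\<not> ?thesis"
  define Bad where "Bad = (\<Union>a\<in>A. {t. P a t})"
  have each: "finite {t. P a t} \<and> card {t. P a t} \<le> 1" if "a \<in> A" for a
  proof (cases "\<exists>t. P a t")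
    case True
    then obtain t0 where "P a t0" by blast
    then have "{t. P a t} = {t0}" using one that by blast
    then show ?thesis by simp
  qed simp
  have finBad: "finite Bad" unfolding Bad_def using finA each by blast
  have "card Bad \<le> (\<Sum>a\<in>A. card {t. P a t})" unfolding Bad_def by (rule card_UN_le[OF finA])
  also have "\<dots> \<le> (\<Sum>a\<in>A. 1)" by (rule sum_mono) (use each in blast)
  also have "\<dots> = card A" by simp
  finally have cB: "card Bad \<le> card A" .
  have "{0..card A} \<subseteq> Bad" unfolding Bad_def using H by auto
  then have "card {0..card A} \<le> card Bad" using finBad card_mono by blast
  then show False using cB by simp
qed

lemma line_two:
  fixes p u c :: "rat^'n" and t t' :: nat
  assumes W: "vec.subspace W" and "p + of_nat t *s u - c \<in> W" "p + of_nat t' *s u - c \<in> W" "t \<noteq> t'"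
  shows "u \<in> W"
proof -
  have "(p + of_nat t *s u - c) - (p + of_nat t' *s u - c) \<in> W"
    using assms vec.subspace_diff by blast
  moreover have "(p + of_nat t *s u - c) - (p + of_nat t' *s u - c) = (of_nat t - of_nat t') *s u"
    by (simp add: vec_eq_iff vector_scalar_mult_def algebra_simps)
  ultimately have h: "(of_nat t - of_nat t') *s u \<in> W" by simp
  have nz: "(of_nat t - of_nat t' :: rat) \<noteq> 0" using assms(4) by simp
  have "inverse (of_nat t - of_nat t' :: rat) *s ((of_nat t - of_nat t') *s u) \<in> W"
    using vec.subspace_scale[OF W h] by blast
  moreover have "inverse (of_nat t - of_nat t' :: rat) *s ((of_nat t - of_nat t') *s u) = u"
    using nz by (simp add: vec_eq_iff vector_scalar_mult_def)
  ultimately show ?thesis by simp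
qed

lemma avoid:
  fixes F :: "(nat^'n) set" and WW :: "(rat^'n) set set"
  assumes finF: "finite F" and finW: "finite WW"
    and WWp: "\<forall>W\<in>WW. vec.subspace W \<and> \<not> (ratvec ` F \<subseteq> W)"
  shows "\<exists>v\<in>natcomb F. \<forall>W\<in>WW. ratvec v \<notin> W"
  using finW WWp
proof (induction WW rule: finite_induct)
  case empty
  then show ?case using natcomb_zero by blast
next
  case (insert W WW)
  then obtain v where v: "v \<in> natcomb F" "\<forall>W'\<in>WW. ratvec v \<notin> W'" by auto
  from insert obtain g where g: "g \<in> F" "ratvec g \<notin> W" by auto
  define P where "P W' t = (ratvec v + of_nat t *s ratvec g - 0 \<in> W')" for W' and t :: nat
  have "\<forall>W'\<in>insert W WW. \<forall>t t'. P W' t \<and> P W' t' \<longrightarrow> t = t'"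
  proof (intro ballI allI impI)
    fix W' t t' assume W': "W' \<in> insert W WW" and PP: "P W' t \<and> P W' t'"
    show "t = t'"
    proof (rule ccontr)
      assume "t \<noteq> t'"
      have sub: "vec.subspace W'" using insert.prems W' by blast
      have gW: "ratvec g \<in> W'" using line_two[OF sub _ _ \<open>t \<noteq> t'\<close>] PP unfolding P_def by blast
      show False
      proof (cases "W' = W")
        case True then show False using gW g by simp
      next
        case False
        then have "W' \<in> WW" using W' by simp
        have "ratvec v + of_nat t *s ratvec g \<in> W'" using PP unfolding P_def by simp
        moreover have "of_nat t *s ratvec g \<in> W'" using vec.subspace_scale[OF sub gW] by blast
        ultimately have "ratvec v + of_nat t *s ratvec g - of_nat t *s ratvec g \<in> W'"
          using vec.subspace_diff[OF sub] by blast
        then show False using v(2) \<open>W' \<in> WW\<close> by simp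
      qed
    qed
  qed
  from pigeon[OF finite.insertI[OF insert.hyps(1)] this] obtain t where
    t: "\<forall>W'\<in>insert W WW. \<not> P W' t" by blast
  define v' where "v' = v + (\<chi> i. t * g $ i)"
  have vN: "v' \<in> natcomb F" unfolding v'_def
    by (intro natcomb_add v natcomb_smul natcomb_base finF g)
  have veq: "ratvec v' = ratvec v + of_nat t *s ratvec g"
    unfolding v'_def by (simp add: ratvec_add ratvec_smul)
  show ?case
  proof (rule bexI[OF _ vN])
    show "\<forall>W'\<in>insert W WW. ratvec v' \<notin> W'" using t unfolding P_def veq by simp
  qed
qed

lemma natcomb_span: "z \<in> natcomb F \<Longrightarrow> ratvec z \<in> vec.span (ratvec ` F)"
  unfolding natcomb_def
proof safe
  fix c :: "_ \<Rightarrow> nat"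
  have "ratvec (\<Sum>f\<in>F. \<chi> i. c f * f $ i) = (\<Sum>f\<in>F. of_nat (c f) *s ratvec f)"
    by (simp add: ratvec_sum ratvec_smul)
  also have "\<dots> \<in> vec.span (ratvec ` F)"
    by (intro vec.span_sum vec.span_scale vec.span_base) auto
  finally show "ratvec (\<Sum>f\<in>F. \<chi> i. c f * f $ i) \<in> vec.span (ratvec ` F)" .
qed

lemma lower:
  fixes F X :: "(nat^'n) set"
  assumes finF: "finite F" and sub: "(\<lambda>v. x0 + v) ` natcomb F \<subseteq> X"
    and hd: "has_dim_at_most (ratvec ` X) k"
  shows "vec.dim (ratvec ` F) \<le> k"
proof (rule ccontr)
  assume "\<not> ?thesis"
  then have kd: "k < vec.dim (ratvec ` F)" by simp
  from hd obtain I where I: "finite I" "\<forall>p\<in>I. vec.subspace (snd p) \<and> vec.dim (snd p) \<le> k"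
    "ratvec ` X \<subseteq> (\<Union>p\<in>I. (\<lambda>v. fst p + v) ` snd p)"
    unfolding has_dim_at_most_def qscale_eq by blast
  have "\<forall>W\<in>snd ` I. vec.subspace W \<and> \<not> (ratvec ` F \<subseteq> W)"
  proof
    fix W assume "W \<in> snd ` I"
    then have W: "vec.subspace W" "vec.dim W \<le> k" using I(2) by auto
    have "\<not> (ratvec ` F \<subseteq> W)"
    proof
      assume "ratvec ` F \<subseteq> W"
      then have "vec.dim (ratvec ` F) \<le> vec.dim W" by (rule vec.dim_subset)
      then show False using W kd by simp
    qed
    then show "vec.subspace W \<and> \<not> (ratvec ` F \<subseteq> W)" using W by blast
  qed
  from avoid[OF finF finite_imageI[OF I(1)] this] obtain v where
    v: "v \<in> natcomb F" "\<forall>W\<in>snd ` I. ratvec v \<notin> W" by blast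
  define P where "P p t = (ratvec x0 + of_nat t *s ratvec v - fst p \<in> snd p)" for p and t :: nat
  have "\<forall>p\<in>I. \<forall>t t'. P p t \<and> P p t' \<longrightarrow> t = t'"
  proof (intro ballI allI impI)
    fix p t t' assume p: "p \<in> I" and PP: "P p t \<and> P p t'"
    show "t = t'"
    proof (rule ccontr)
      assume "t \<noteq> t'"
      have "ratvec v \<in> snd p"
        using line_two[OF _ _ _ \<open>t \<noteq> t'\<close>] I(2) p PP unfolding P_def by blast
      then show False using v(2) p by blast
    qed
  qed
  from pigeon[OF I(1) this] obtain t where t: "\<forall>p\<in>I. \<not> P p t" by blast
  define y where "y = x0 + (\<chi> i. t * v $ i)"
  have "y \<in> X" unfolding y_def using sub natcomb_smul[OF v(1)] by blast
  then obtain p where p: "p \<in> I" "ratvec y \<in> (\<lambda>w. fst p + w) ` snd p" using I(3) by blast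
  have "ratvec y = ratvec x0 + of_nat t *s ratvec v" unfolding y_def by (simp add: ratvec_add ratvec_smul)
  with p have "P p t" unfolding P_def by (auto simp: algebra_simps)
  then show False using t p by blast
qed

lemma upper:
  fixes B F :: "(nat ^ 'n) set" and x :: "nat ^ 'n"
  assumes finB: "finite B" and finF: "finite F"
    and dir: "\<forall>b\<in>B. \<forall>b'\<in>B. ((\<lambda>v. b + v) ` natcomb F) \<inter> ((\<lambda>v. b' + v) ` natcomb F) \<noteq> {}"
    and xL: "x \<in> (\<Union>b\<in>B. (\<lambda>v. b + v) ` natcomb F)"
  shows "\<exists>I. finite I \<and> (\<forall>p\<in>I. vec.subspace (snd p) \<and> vec.dim (snd p) < vec.dim (ratvec ` F)) \<and>
     ratvec ` ((\<Union>b\<in>B. (\<lambda>v. b + v) ` natcomb F) - (\<lambda>v. x + v) ` natcomb F)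
       \<subseteq> (\<Union>p\<in>I. (\<lambda>v. fst p + v) ` snd p)"
proof -
  from xL obtain b0 s where b0: "b0 \<in> B" "s \<in> natcomb F" "x = b0 + s" by blast
  have "\<exists>u\<in>natcomb F. \<forall>w\<in>natcomb F. b + (u + w) \<in> (\<lambda>v. x + v) ` natcomb F" if "b \<in> B" for b
  proof -
    from dir that b0(1) obtain y where "y \<in> (\<lambda>v. b + v) ` natcomb F" "y \<in> (\<lambda>v. b0 + v) ` natcomb F"
      by blast
    then obtain u1 u2 where u: "u1 \<in> natcomb F" "u2 \<in> natcomb F" "b + u1 = b0 + u2" by auto
    show ?thesis
    proof (intro bexI ballI)
      fix w assume w: "w \<in> natcomb F"
      have "b + ((u1 + s) + w) = (b + u1) + (s + w)" by (simp add: add.assoc)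
      also have "\<dots> = (b0 + u2) + (s + w)" using u(3) by simp
      also have "\<dots> = x + (u2 + w)" using b0(3) by (simp add: add_ac)
      finally have "b + ((u1 + s) + w) = x + (u2 + w)" .
      then show "b + ((u1 + s) + w) \<in> (\<lambda>v. x + v) ` natcomb F" using natcomb_add[OF u(2) w] by auto
    qed (rule natcomb_add[OF u(1) b0(2)])
  qed
  then obtain U where U: "\<And>b. b \<in> B \<Longrightarrow> U b \<in> natcomb F"
    "\<And>b w. b \<in> B \<Longrightarrow> w \<in> natcomb F \<Longrightarrow> b + (U b + w) \<in> (\<lambda>v. x + v) ` natcomb F"
    by metis
  have "\<exists>C. U b = (\<Sum>f\<in>F. \<chi> i. C f * f$i)" if "b \<in> B" for b
    using U(1)[OF that] unfolding natcomb_def by blast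
  then obtain C where C: "\<And>b. b \<in> B \<Longrightarrow> U b = (\<Sum>f\<in>F. \<chi> i. C b f * f$i)" by metis
  define V where "V = vec.span (ratvec ` F)"
  have ex: "\<forall>bS. \<exists>K. fst bS \<in> B \<and> snd bS \<subseteq> F \<and> vec.span (ratvec ` snd bS) = V \<longrightarrow>
      (\<forall>a. (\<forall>g\<in>snd bS. K \<le> a g) \<longrightarrow>
         (\<Sum>f\<in>F. \<chi> i. a f * f$i) \<in> (\<lambda>v. U (fst bS) + v) ` natcomb F)"
  proof
    fix bS :: "(nat^'n) \<times> (nat^'n) set"
    show "\<exists>K. fst bS \<in> B \<and> snd bS \<subseteq> F \<and> vec.span (ratvec ` snd bS) = V \<longrightarrow>
      (\<forall>a. (\<forall>g\<in>snd bS. K \<le> a g) \<longrightarrow>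
         (\<Sum>f\<in>F. \<chi> i. a f * f$i) \<in> (\<lambda>v. U (fst bS) + v) ` natcomb F)"
    proof (cases "fst bS \<in> B \<and> snd bS \<subseteq> F \<and> vec.span (ratvec ` snd bS) = V")
      case True
      then obtain K where K: "\<forall>a. (\<forall>g\<in>snd bS. K \<le> a g) \<longrightarrow>
         (\<Sum>f\<in>F. \<chi> i. a f * f$i) \<in> (\<lambda>v. (\<Sum>f\<in>F. \<chi> i. C (fst bS) f * f$i) + v) ` natcomb F"
        using key_S[OF finF, of "snd bS" "C (fst bS)"] unfolding V_def by blast
      show ?thesis
        by (rule exI[of _ K]) (use K C True in simp)
    qed blast
  qed
  obtain Kf where Kf: "\<And>bS. fst bS \<in> B \<and> snd bS \<subseteq> F \<and> vec.span (ratvec ` snd bS) = V \<Longrightarrow>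
      (\<forall>a. (\<forall>g\<in>snd bS. Kf bS \<le> a g) \<longrightarrow>
         (\<Sum>f\<in>F. \<chi> i. a f * f$i) \<in> (\<lambda>v. U (fst bS) + v) ` natcomb F)"
    using choice[OF ex] by blast
  define Kb where "Kb (b :: nat^'n) = (\<Sum>S\<in>Pow F. Kf (b, S))" for b
  define WT where "WT (T :: (nat^'n) set) = vec.span (ratvec ` (F - T))" for T
  define PT where "PT (b :: nat^'n) (T :: (nat^'n) set) = (\<lambda>a. \<Sum>f\<in>T. \<chi> i. a f * f$i) ` PiE T (\<lambda>_. {..<Kb b})" for b T
  define good where "good T \<longleftrightarrow> T \<subseteq> F \<and> WT T \<noteq> V" for T
  define I where "I = (\<Union>b\<in>B. \<Union>T\<in>Collect good. (\<lambda>p. (ratvec (b + p), WT T)) ` PT b T)"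
  have fG: "finite (Collect good)"
    by (rule finite_subset[of _ "Pow F"]) (unfold good_def, blast, simp add: finF)
  have fPT: "finite (PT b T)" if "T \<in> Collect good" for b T
  proof -
    have "T \<subseteq> F" using that unfolding good_def by blast
    then have "finite T" using finF rev_finite_subset by blast
    then show ?thesis unfolding PT_def by (intro finite_imageI finite_PiE) auto
  qed
  have fI: "finite I" unfolding I_def
    by (intro finite_UN_I finB fG finite_imageI fPT)
  have sI: "\<forall>p\<in>I. vec.subspace (snd p) \<and> vec.dim (snd p) < vec.dim (ratvec ` F)"
  proof
    fix p assume "p \<in> I"
    then obtain T where T0: "good T" "snd p = WT T" unfolding I_def by (elim UN_E imageE CollectE) simp
    then have T: "T \<subseteq> F" "WT T \<noteq> V" "snd p = WT T" unfolding good_def by auto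
    have "WT T \<subseteq> V" unfolding WT_def V_def by (intro vec.span_mono image_mono) blast
    then have "WT T \<subset> V" using T(2) by (rule psubsetI)
    then have "vec.dim (ratvec ` (F - T)) < vec.dim (ratvec ` F)"
      unfolding WT_def V_def by (rule vec.dim_psubset)
    then show "vec.subspace (snd p) \<and> vec.dim (snd p) < vec.dim (ratvec ` F)"
      unfolding T(3) WT_def by (simp add: vec.dim_span vec.subspace_span)
  qed
  have cI: "ratvec ` ((\<Union>b\<in>B. (\<lambda>v. b + v) ` natcomb F) - (\<lambda>v. x + v) ` natcomb F)
       \<subseteq> (\<Union>p\<in>I. (\<lambda>v. fst p + v) ` snd p)"
  proof
    fix ry assume "ry \<in> ratvec ` ((\<Union>b\<in>B. (\<lambda>v. b + v) ` natcomb F) - (\<lambda>v. x + v) ` natcomb F)"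
    then obtain y where y: "y \<in> (\<Union>b\<in>B. (\<lambda>v. b + v) ` natcomb F) - (\<lambda>v. x + v) ` natcomb F"
      "ry = ratvec y" by (rule imageE)
    then obtain b z where bz: "b \<in> B" "z \<in> natcomb F" "b + z \<notin> (\<lambda>v. x + v) ` natcomb F"
      "ry = ratvec (b + z)" by blast
    from bz(2) obtain a where a: "z = (\<Sum>f\<in>F. \<chi> i. a f * f$i)" unfolding natcomb_def by blast
    define T where "T = {f\<in>F. a f < Kb b}"
    have TF: "T \<subseteq> F" unfolding T_def by blast
    have WTV: "WT T \<noteq> V"
    proof
      assume eqV: "WT T = V"
      have c: "fst (b, F - T) \<in> B \<and> snd (b, F - T) \<subseteq> F \<and> vec.span (ratvec ` snd (b, F - T)) = V"
        using bz(1) eqV unfolding WT_def by auto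
      have "\<forall>g\<in>F - T. Kf (b, F - T) \<le> a g"
      proof
        fix g assume g: "g \<in> F - T"
        have "Kf (b, F - T) \<le> Kb b" unfolding Kb_def
          by (rule member_le_sum[of "F - T" "Pow F" "\<lambda>S. Kf (b, S)"]) (use finF in auto)
        also have "Kb b \<le> a g" using g unfolding T_def by auto
        finally show "Kf (b, F - T) \<le> a g" .
      qed
      then have "z \<in> (\<lambda>v. U b + v) ` natcomb F" using Kf[OF c] a by simp
      then obtain w where "w \<in> natcomb F" "z = U b + w" by blast
      then show False using U(2)[OF bz(1)] bz(3) by simp
    qed
    define p where "p = (\<Sum>f\<in>T. \<chi> i. a f * f$i)"
    have pP: "p \<in> PT b T" unfolding PT_def p_def
    proof (rule image_eqI[of _ _ "restrict a T"])
      show "(\<Sum>f\<in>T. \<chi> i. a f * f $ i) = (\<Sum>f\<in>T. \<chi> i. restrict a T f * f $ i)"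
        by (rule sum.cong) auto
      show "restrict a T \<in> PiE T (\<lambda>_. {..<Kb b})" unfolding T_def by auto
    qed
    have zsplit: "z = p + (\<Sum>f\<in>F - T. \<chi> i. a f * f$i)"
      unfolding a p_def using sum.subset_diff[OF TF finF] by (simp add: add.commute)
    have inW: "ratvec (\<Sum>f\<in>F - T. \<chi> i. a f * f$i) \<in> WT T"
      unfolding WT_def by (rule natcomb_span) (auto simp: natcomb_def)
    have "ry = ratvec (b + p) + ratvec (\<Sum>f\<in>F - T. \<chi> i. a f * f$i)"
      unfolding bz(4) zsplit by (simp add: ratvec_add add.assoc)
    then have "ry \<in> (\<lambda>v. fst (ratvec (b + p), WT T) + v) ` snd (ratvec (b + p), WT T)"
      using inW by simp
    moreover have "(ratvec (b + p), WT T) \<in> I"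
      unfolding I_def
      by (rule UN_I[OF bz(1)], rule UN_I[of T], use TF WTV in \<open>simp add: good_def\<close>, rule imageI[OF pP])
    ultimately show "ry \<in> (\<Union>p\<in>I. (\<lambda>v. fst p + v) ` snd p)" by (rule UN_I[rotated])
  qed
  show ?thesis by (rule exI[of _ I], intro conjI, fact fI, fact sI, fact cI)
qed

theorem mainTheorem17:
  fixes B F :: "(nat ^ 'n) set" and x :: "nat ^ 'n"
  assumes "finite B" and "finite F"
    and "\<forall>b\<in>B. \<forall>b'\<in>B. ((\<lambda>v. b + v) ` natcomb F) \<inter> ((\<lambda>v. b' + v) ` natcomb F) \<noteq> {}"
    and "x \<in> (\<Union>b\<in>B. (\<lambda>v. b + v) ` natcomb F)"
  shows "natdim ((\<Union>b\<in>B. (\<lambda>v. b + v) ` natcomb F) - (\<lambda>v. x + v) ` natcomb F)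
         < natdim (\<Union>b\<in>B. (\<lambda>v. b + v) ` natcomb F)"
proof -
  define L where "L = (\<Union>b\<in>B. (\<lambda>v. b + v) ` natcomb F)"
  define L' where "L' = L - (\<lambda>v. x + v) ` natcomb F"
  define d where "d = vec.dim (ratvec ` F)"
  have xL: "x \<in> L" using assms(4) unfolding L_def .
  have hdL: "has_dim_at_most (ratvec ` L) d"
    unfolding has_dim_at_most_def qscale_eq
  proof (rule exI[of _ "(\<lambda>b. (ratvec b, vec.span (ratvec ` F))) ` B"], intro conjI)
    show "finite ((\<lambda>b. (ratvec b, vec.span (ratvec ` F))) ` B)" using assms(1) by simp
    show "\<forall>p\<in>(\<lambda>b. (ratvec b, vec.span (ratvec ` F))) ` B. vec.subspace (snd p) \<and> vec.dim (snd p) \<le> d"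
      unfolding d_def by (auto simp: vec.subspace_span vec.dim_span)
    show "ratvec ` L \<subseteq> (\<Union>p\<in>(\<lambda>b. (ratvec b, vec.span (ratvec ` F))) ` B. (\<lambda>v. fst p + v) ` snd p)"
    proof
      fix ry assume "ry \<in> ratvec ` L"
      then obtain b z where bz: "b \<in> B" "z \<in> natcomb F" "ry = ratvec (b + z)" unfolding L_def by blast
      have "ry \<in> (\<lambda>v. ratvec b + v) ` vec.span (ratvec ` F)"
        using natcomb_span[OF bz(2)] bz(3) by (simp add: ratvec_add)
      then show "ry \<in> (\<Union>p\<in>(\<lambda>b. (ratvec b, vec.span (ratvec ` F))) ` B. (\<lambda>v. fst p + v) ` snd p)"
        using bz(1) by auto
    qed
  qed
  have Lne: "ratvec ` L \<noteq> {}" using xL by blast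
  define m where "m = (LEAST k. has_dim_at_most (ratvec ` L) k)"
  have hm: "has_dim_at_most (ratvec ` L) m" unfolding m_def by (rule LeastI[where P="\<lambda>k. has_dim_at_most (ratvec ` L) k", OF hdL])
  obtain b0 s where b0: "b0 \<in> B" "s \<in> natcomb F" "x = b0 + s" using xL unfolding L_def by blast
  have subL: "(\<lambda>v. x + v) ` natcomb F \<subseteq> L"
  proof
    fix y assume "y \<in> (\<lambda>v. x + v) ` natcomb F"
    then obtain w where w: "w \<in> natcomb F" "y = x + w" by blast
    then have "y = b0 + (s + w)" using b0(3) by (simp add: add.assoc)
    then show "y \<in> L" unfolding L_def using b0(1) natcomb_add[OF b0(2) w(1)] by blast
  qed
  have dm: "d \<le> m" unfolding d_def by (rule lower[OF assms(2) subL hm])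
  have RL: "natdim L = int m" unfolding natdim_def setdim_def m_def using Lne by simp
  show ?thesis
  proof (cases "ratvec ` L' = {}")
    case True
    then have "natdim L' = -1" unfolding natdim_def setdim_def by simp
    then show ?thesis using RL unfolding L'_def L_def by simp
  next
    case False
    obtain I where I: "finite I" "\<forall>p\<in>I. vec.subspace (snd p) \<and> vec.dim (snd p) < d"
      "ratvec ` L' \<subseteq> (\<Union>p\<in>I. (\<lambda>v. fst p + v) ` snd p)"
      using upper[OF assms] unfolding L'_def L_def d_def by blast
    from False obtain ry where "ry \<in> ratvec ` L'" by blast
    with I(3) obtain p where "p \<in> I" by blast
    with I(2) have dpos: "d \<ge> 1" by fastforce
    have "has_dim_at_most (ratvec ` L') (d - 1)"
      unfolding has_dim_at_most_def qscale_eq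
      by (rule exI[of _ I]) (use I in fastforce)
    then have "(LEAST k. has_dim_at_most (ratvec ` L') k) \<le> d - 1" by (rule Least_le)
    then have "natdim L' \<le> int (d - 1)" unfolding natdim_def setdim_def using False by simp
    then have "natdim L' < natdim L" using RL dm dpos by linarith
    then show ?thesis unfolding L'_def L_def .
  qed
qed

end
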